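(* Let $M$ be an $R$-module. (a) If $M$ is a Hopfian comultiplication $R$-module satisfying the dual of Property $\mathcal{A}$, then $M$ satisfies Property $\mathcal{A}$. (b) If $M$ is a co-Hopfian multiplication $R$-module satisfying Property $\mathcal{A}$, then $M$ satisfies the dual of Property $\mathcal{A}$.
   Context: All rings are commutative with identity. For an $R$-module $M$, $W_R(M)=\{r\in R : rM\neq M\}$ and $Z_R(M)=\{r\in R: rm=0 \text{ for some } 0\neq m\in M\}$. An $R$-module $M$ satisfies the dual of Property $\mathcal{A}$ if for every finitely generated ideal $I$ of $R$ with $I\subseteq W_R(M)$ we have $IM\neq M$. $M$ satisfies Property $\mathcal{A}$ if for every finitely generated ideal $I$ of $R$ with $I\subseteq Z_R(M)$ we have $(0:_M I)\neq 0$. $M$ is Hopfian (resp. co-Hopfian) if every surjective (resp. injective) endomorphism of $M$ is an isomorphism. $M$ is a multiplication module if every submodule $N$ equals $IM$ for some ideal $I$; $M$ is a comultiplication module if every submodule $N$ equals $(0:_M I)$ for some ideal $I$ of $R$. *)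

theory Defs
  imports Complex_Main
begin

definition ideal_of :: "'a::comm_ring_1 set \<Rightarrow> bool" where
  "ideal_of I \<longleftrightarrow> module.subspace ((*) :: 'a \<Rightarrow> 'a \<Rightarrow> 'a) I"

definition fg_ideal :: "'a::comm_ring_1 set \<Rightarrow> bool" where
  "fg_ideal I \<longleftrightarrow> (\<exists>F. finite F \<and> I = module.span ((*) :: 'a \<Rightarrow> 'a \<Rightarrow> 'a) F)"

definition W_set :: "('a::comm_ring_1 \<Rightarrow> 'b::ab_group_add \<Rightarrow> 'b) \<Rightarrow> 'a set" where
  "W_set sc = {r. range (sc r) \<noteq> UNIV}"

definition Z_set :: "('a::comm_ring_1 \<Rightarrow> 'b::ab_group_add \<Rightarrow> 'b) \<Rightarrow> 'a set" where
  "Z_set sc = {r. \<exists>m. m \<noteq> 0 \<and> sc r m = 0}"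

definition ideal_mult :: "('a::comm_ring_1 \<Rightarrow> 'b::ab_group_add \<Rightarrow> 'b) \<Rightarrow> 'a set \<Rightarrow> 'b set" where
  "ideal_mult sc I = module.span sc {sc r m | r m. r \<in> I}"

definition annih_sub :: "('a::comm_ring_1 \<Rightarrow> 'b::ab_group_add \<Rightarrow> 'b) \<Rightarrow> 'a set \<Rightarrow> 'b set" where
  "annih_sub sc I = {m. \<forall>r\<in>I. sc r m = 0}"

definition dual_property_A :: "('a::comm_ring_1 \<Rightarrow> 'b::ab_group_add \<Rightarrow> 'b) \<Rightarrow> bool" where
  "dual_property_A sc \<longleftrightarrow>
     (\<forall>I. fg_ideal I \<and> I \<subseteq> W_set sc \<longrightarrow> ideal_mult sc I \<noteq> UNIV)"

definition property_A :: "('a::comm_ring_1 \<Rightarrow> 'b::ab_group_add \<Rightarrow> 'b) \<Rightarrow> bool" where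
  "property_A sc \<longleftrightarrow>
     (\<forall>I. fg_ideal I \<and> I \<subseteq> Z_set sc \<longrightarrow> annih_sub sc I \<noteq> {0})"

definition hopfian :: "('a::comm_ring_1 \<Rightarrow> 'b::ab_group_add \<Rightarrow> 'b) \<Rightarrow> bool" where
  "hopfian sc \<longleftrightarrow> (\<forall>f. module_hom sc sc f \<and> surj f \<longrightarrow> bij f)"

definition cohopfian :: "('a::comm_ring_1 \<Rightarrow> 'b::ab_group_add \<Rightarrow> 'b) \<Rightarrow> bool" where
  "cohopfian sc \<longleftrightarrow> (\<forall>f. module_hom sc sc f \<and> inj f \<longrightarrow> bij f)"

definition multiplication_module :: "('a::comm_ring_1 \<Rightarrow> 'b::ab_group_add \<Rightarrow> 'b) \<Rightarrow> bool" where
  "multiplication_module sc \<longleftrightarrow>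
     (\<forall>N. module.subspace sc N \<longrightarrow> (\<exists>I. ideal_of I \<and> N = ideal_mult sc I))"

definition comultiplication_module :: "('a::comm_ring_1 \<Rightarrow> 'b::ab_group_add \<Rightarrow> 'b) \<Rightarrow> bool" where
  "comultiplication_module sc \<longleftrightarrow>
     (\<forall>N. module.subspace sc N \<longrightarrow> (\<exists>I. ideal_of I \<and> N = annih_sub sc I))"

end

theory Submission
  imports Defs
begin

lemma scal_hom:
  assumes m: "module sc"
  shows "module_hom sc sc (sc r)"
  unfolding module_hom_iff using m
  by (simp add: module.scale_right_distrib module.scale_left_commute)

lemma scal_diff:
  assumes m: "module sc"
  shows "sc r (x - y) = sc r x - sc r y"
  using m by (simp add: module.scale_right_diff_distrib)

theorem proposition2p8:
  fixes sc :: "'a::comm_ring_1 \<Rightarrow> 'b::ab_group_add \<Rightarrow> 'b"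
  assumes "module sc"
  shows "(hopfian sc \<and> comultiplication_module sc \<and> dual_property_A sc \<longrightarrow> property_A sc)
       \<and> (cohopfian sc \<and> multiplication_module sc \<and> property_A sc \<longrightarrow> dual_property_A sc)"
proof (intro conjI impI)
  assume h: "hopfian sc \<and> comultiplication_module sc \<and> dual_property_A sc"
  have ZW: "Z_set sc \<subseteq> W_set sc"
  proof
    fix r assume "r \<in> Z_set sc"
    then obtain m where m: "m \<noteq> 0" "sc r m = 0" by (auto simp: Z_set_def)
    show "r \<in> W_set sc"
    proof (rule ccontr)
      assume "r \<notin> W_set sc"
      hence "surj (sc r)" by (auto simp: W_set_def)
      hence "bij (sc r)" using h scal_hom[OF assms] by (auto simp: hopfian_def)
      hence "inj (sc r)" by (simp add: bij_is_inj)
      moreover have "sc r 0 = 0" using assms by (simp add: module.scale_zero_right)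
      ultimately show False using m by (metis injD)
    qed
  qed
  show "property_A sc"
    unfolding property_A_def
  proof (intro allI impI)
    fix I :: "'a set" assume I: "fg_ideal I \<and> I \<subseteq> Z_set sc"
    hence ne: "ideal_mult sc I \<noteq> UNIV" using h ZW by (auto simp: dual_property_A_def)
    show "annih_sub sc I \<noteq> {0}"
    proof
      assume A: "annih_sub sc I = {0}"
      have "module.subspace sc (ideal_mult sc I)"
        unfolding ideal_mult_def using assms by (simp add: module.subspace_span)
      then obtain J where J: "ideal_mult sc I = annih_sub sc J"
        using h by (auto simp: comultiplication_module_def)
      have "m \<in> ideal_mult sc I" for m
      proof -
        have "sc j m = 0" if "j \<in> J" for j
        proof -
          have "sc i (sc j m) = 0" if "i \<in> I" for i
          proof -
            have "sc i m \<in> ideal_mult sc I"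
              unfolding ideal_mult_def using assms `i \<in> I`
              by (auto intro!: module.span_base)
            hence "sc j (sc i m) = 0" using J `j \<in> J` by (auto simp: annih_sub_def)
            thus ?thesis using assms by (metis module.scale_left_commute)
          qed
          hence "sc j m \<in> annih_sub sc I" by (auto simp: annih_sub_def)
          thus ?thesis using A by auto
        qed
        thus ?thesis using J by (auto simp: annih_sub_def)
      qed
      thus False using ne by auto
    qed
  qed
next
  assume h: "cohopfian sc \<and> multiplication_module sc \<and> property_A sc"
  have WZ: "W_set sc \<subseteq> Z_set sc"
  proof
    fix r assume "r \<in> W_set sc"
    hence ns: "\<not> surj (sc r)" by (auto simp: W_set_def)
    show "r \<in> Z_set sc"
    proof (rule ccontr)
      assume "r \<notin> Z_set sc"
      hence z: "\<And>m. sc r m = 0 \<Longrightarrow> m = 0" by (auto simp: Z_set_def)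
      have "inj (sc r)"
      proof (rule injI)
        fix x y assume "sc r x = sc r y"
        hence "sc r (x - y) = 0" using scal_diff[OF assms] by simp
        thus "x = y" using z by fastforce
      qed
      hence "bij (sc r)" using h scal_hom[OF assms] by (auto simp: cohopfian_def)
      thus False using ns by (simp add: bij_is_surj)
    qed
  qed
  show "dual_property_A sc"
    unfolding dual_property_A_def
  proof (intro allI impI)
    fix I :: "'a set" assume I: "fg_ideal I \<and> I \<subseteq> W_set sc"
    hence ne: "annih_sub sc I \<noteq> {0}" using h WZ by (auto simp: property_A_def)
    show "ideal_mult sc I \<noteq> UNIV"
    proof
      assume A: "ideal_mult sc I = UNIV"
      have sub: "module.subspace sc (annih_sub sc I)"
        unfolding annih_sub_def module.subspace_def[OF assms]
        using assms by (auto simp: module.scale_right_distrib module.scale_left_commute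
              module.scale_zero_right)
      then obtain J where J: "annih_sub sc I = ideal_mult sc J"
        using h by (auto simp: multiplication_module_def)
      have jz: "sc j m = 0" if "j \<in> J" for j m
      proof -
        have ker: "module.subspace sc {x. sc j x = 0}"
          unfolding module.subspace_def[OF assms]
          using assms by (auto simp: module.scale_right_distrib module.scale_left_commute
              module.scale_zero_right)
        have "{sc i m' | i m'. i \<in> I} \<subseteq> {x. sc j x = 0}"
        proof clarify
          fix i m' assume "i \<in> I"
          have "sc j m' \<in> ideal_mult sc J"
            unfolding ideal_mult_def using assms `j \<in> J`
            by (auto intro!: module.span_base)
          hence "sc i (sc j m') = 0" using J `i \<in> I` by (auto simp: annih_sub_def)
          thus "sc j (sc i m') = 0" using assms by (metis module.scale_left_commute)
        qed
        hence "ideal_mult sc I \<subseteq> {x. sc j x = 0}"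
          unfolding ideal_mult_def using module.span_minimal[OF assms _ ker] by blast
        thus ?thesis using A by auto
      qed
      have s0: "module.subspace sc {0}"
        unfolding module.subspace_def[OF assms] using assms by (simp add: module.scale_zero_right)
      have "ideal_mult sc J \<subseteq> {0}"
        unfolding ideal_mult_def
        by (rule module.span_minimal[OF assms _ s0]) (use jz in auto)
      moreover have "0 \<in> annih_sub sc I" using assms
        by (simp add: annih_sub_def module.scale_zero_right)
      ultimately show False using ne J by auto
    qed
  qed
qed

end
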